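(* Let $(X_n,\eta_n)$ be a time-homogeneous Markov chain on a locally finite set $\Sigma\subseteq\mathbb{R}_+\times S$ ($S$ finite), and suppose that for some $p>2$ there is $C_p<\infty$ with $\mathbb{E}_{x,i}[|X_{n+1}-X_n|^p]\le C_p$ for all $(x,i)\in\Sigma$. Let $b_i\in\mathbb{R}$, $i\in S$, and let $f_r$ be as in the context. Then for any $r\in(2-p,p]$ one can choose $\zeta\in(0,1)$ such that, with $E_n=\{|X_{n+1}-X_n|\le X_n^\zeta\}$, as $x\to\infty$, \[\mathbb{E}_{x,i}\big[|f_r(X_{n+1},\eta_{n+1})-f_r(X_n,\eta_n)|\mathbf 1(E_n^c)\big]=o(x^{r-2}).\]
   Context: $\mathbb{E}_{x,i}[\cdot]=\mathbb{E}[\cdot\mid X_n=x,\eta_n=i]$; $E_n^c$ is the complement of $E_n$. For $r\in\mathbb{R}$, $x_0:=1+\sqrt{|r|\max_i|b_i|}$ and $f_r(x,i)=x^r+\frac r2b_ix^{r-2}$ for $x\ge x_0$, $f_r(x,i)=x_0^r+\frac r2b_ix_0^{r-2}$ for $x<x_0$. *)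

theory Defs
  imports "HOL-Probability.Probability"
begin

definition x0_thr :: "real \<Rightarrow> 'a set \<Rightarrow> ('a \<Rightarrow> real) \<Rightarrow> real" where
  "x0_thr r S b = 1 + sqrt (\<bar>r\<bar> * Max ((\<lambda>i. \<bar>b i\<bar>) ` S))"

definition f_r :: "real \<Rightarrow> 'a set \<Rightarrow> ('a \<Rightarrow> real) \<Rightarrow> real \<Rightarrow> 'a \<Rightarrow> real" where
  "f_r r S b x i = (let x0 = x0_thr r S b in
     if x \<ge> x0 then x powr r + r / 2 * b i * x powr (r - 2)
     else x0 powr r + r / 2 * b i * x0 powr (r - 2))"

definition locally_finite_state_space :: "(real \<times> 'a) set \<Rightarrow> 'a set \<Rightarrow> bool" where
  "locally_finite_state_space \<Sigma> S \<longleftrightarrow> finite S \<and> \<Sigma> \<subseteq> {0..} \<times> S \<and>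
     (\<forall>a. finite (\<Sigma> \<inter> ({..a} \<times> S)))"

end

theory Submission
  imports Defs
begin

lemma x0_ge1:
  assumes "finite S" "S \<noteq> {}"
  shows "x0_thr r S b \<ge> 1"
proof -
  obtain j where "j \<in> S" using assms by auto
  hence "0 \<le> Max ((\<lambda>i. \<bar>b i\<bar>) ` S)" using assms
    by (meson Max_ge_iff abs_ge_zero finite_imageI image_eqI image_is_empty)
  thus ?thesis unfolding x0_thr_def by simp
qed

lemma fbound:
  assumes fin: "finite S" and j: "j \<in> S"
  shows "\<bar>f_r r S b y j\<bar> \<le> (1 + \<bar>r\<bar> * Max ((\<lambda>i. \<bar>b i\<bar>) ` S) / 2)
            * (max y (x0_thr r S b)) powr (max r 0)"
proof -
  define M where "M = x0_thr r S b"
  define B where "B = Max ((\<lambda>i. \<bar>b i\<bar>) ` S)"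
  define z where "z = max y M"
  have Sne: "S \<noteq> {}" using j by auto
  have M1: "M \<ge> 1" unfolding M_def by (rule x0_ge1[OF fin Sne])
  have z1: "z \<ge> 1" using M1 z_def by simp
  have bj: "\<bar>b j\<bar> \<le> B" unfolding B_def using fin j by auto
  have f: "f_r r S b y j = z powr r + r / 2 * b j * z powr (r - 2)"
    by (cases "y \<ge> M") (simp_all add: f_r_def z_def M_def Let_def max_def)
  have a: "z powr (r-2) \<le> z powr r" using z1 by (intro powr_mono) auto
  have c: "z powr r \<le> z powr (max r 0)" using z1 by (intro powr_mono) auto
  have "\<bar>f_r r S b y j\<bar> \<le> z powr r + \<bar>r\<bar> / 2 * \<bar>b j\<bar> * z powr (r - 2)"
  proof -
    have "\<bar>r / 2 * b j * z powr (r - 2)\<bar> = \<bar>r\<bar> / 2 * \<bar>b j\<bar> * z powr (r - 2)"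
      by (simp add: abs_mult)
    moreover have "\<bar>z powr r\<bar> = z powr r" by simp
    ultimately show ?thesis unfolding f by (metis abs_triangle_ineq)
  qed
  also have "\<dots> \<le> z powr r + \<bar>r\<bar> / 2 * B * z powr r"
    using a bj by (intro add_left_mono mult_mono) simp_all
  also have "\<dots> = (1 + \<bar>r\<bar> * B / 2) * z powr r" by (simp add: algebra_simps)
  also have "\<dots> \<le> (1 + \<bar>r\<bar> * B / 2) * z powr (max r 0)"
    using c bj by (intro mult_left_mono) auto
  finally show ?thesis unfolding B_def z_def M_def .
qed


lemma pointwise:
  fixes x Y D \<zeta> q p K M fy fx :: real
  assumes xM: "x \<ge> M" and M1: "M \<ge> 1" and D: "D = \<bar>Y - x\<bar>" and Dgt: "D > x powr \<zeta>"
    and q0: "0 \<le> q" and qp: "q \<le> p" and K0: "K \<ge> 0"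
    and fY: "\<bar>fy\<bar> \<le> K * (max Y M) powr q" and fX: "\<bar>fx\<bar> \<le> K * (max x M) powr q"
  shows "\<bar>fy - fx\<bar> \<le> (K * (2 powr q + 1) * x powr (q - \<zeta> * p) + K * 2 powr q * x powr (\<zeta> * (q - p))) * D powr p"
proof -
  have x0: "x > 0" using xM M1 by simp
  have xz: "x powr \<zeta> > 0" using x0 by simp
  have D0: "D > 0" using Dgt xz by linarith
  have mx: "max x M = x" using xM by simp
  have m1: "max Y M \<le> x + D" using D xM by auto
  have m2: "max Y M > 0" using M1 by simp
  have "(max Y M) powr q \<le> (x + D) powr q" using m1 m2 q0 by (intro powr_mono2) auto
  also have "\<dots> \<le> (2 * max x D) powr q" using q0 x0 D0 by (intro powr_mono2) auto
  also have "\<dots> = 2 powr q * (max x D) powr q" using x0 D0 by (simp add: powr_mult)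
  also have "\<dots> \<le> 2 powr q * (x powr q + D powr q)"
    by (intro mult_left_mono) (auto simp: max_def)
  finally have mY: "(max Y M) powr q \<le> 2 powr q * (x powr q + D powr q)" .
  have "\<bar>fy - fx\<bar> \<le> \<bar>fy\<bar> + \<bar>fx\<bar>" by simp
  also have "\<dots> \<le> K * (2 powr q * (x powr q + D powr q)) + K * x powr q"
    using fY fX mY K0 mx by (smt (verit) mult_left_mono)
  also have "\<dots> = K * (2 powr q + 1) * x powr q + K * 2 powr q * D powr q"
    by (simp add: algebra_simps)
  finally have main: "\<bar>fy - fx\<bar> \<le> K * (2 powr q + 1) * x powr q + K * 2 powr q * D powr q" .
  have p0: "p \<ge> 0" using q0 qp by simp
  have Dp: "x powr (\<zeta> * p) \<le> D powr p"
  proof -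
    have "(x powr \<zeta>) powr p \<le> D powr p" using Dgt xz p0 by (intro powr_mono2) auto
    thus ?thesis by (simp add: powr_powr)
  qed
  have h1: "x powr q \<le> x powr (q - \<zeta> * p) * D powr p"
  proof -
    have "x powr q = x powr (q - \<zeta> * p) * x powr (\<zeta> * p)" by (simp add: powr_add[symmetric])
    also have "\<dots> \<le> x powr (q - \<zeta> * p) * D powr p" using Dp by (intro mult_left_mono) auto
    finally show ?thesis .
  qed
  have h2: "D powr q \<le> x powr (\<zeta> * (q - p)) * D powr p"
  proof -
    have "D powr q = D powr (q - p) * D powr p" by (simp add: powr_add[symmetric])
    also have "D powr (q - p) \<le> (x powr \<zeta>) powr (q - p)"
      using qp xz Dgt by (intro powr_mono2') auto
    also have "(x powr \<zeta>) powr (q - p) = x powr (\<zeta> * (q - p))" by (simp add: powr_powr)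
    finally show ?thesis by (simp add: mult_right_mono)
  qed
  have c1: "K * (2 powr q + 1) \<ge> 0" "K * 2 powr q \<ge> 0" using K0 by auto
  have "K * (2 powr q + 1) * x powr q + K * 2 powr q * D powr q
     \<le> K * (2 powr q + 1) * (x powr (q - \<zeta> * p) * D powr p) + K * 2 powr q * (x powr (\<zeta> * (q - p)) * D powr p)"
    using h1 h2 c1 by (intro add_mono mult_left_mono) auto
  also have "\<dots> = (K * (2 powr q + 1) * x powr (q - \<zeta> * p) + K * 2 powr q * x powr (\<zeta> * (q - p))) * D powr p"
    by (simp add: algebra_simps)
  finally show ?thesis using main by simp
qed
lemma eventual:
  fixes A1 A2 a1 a2 c \<epsilon> :: real
  assumes "a1 < c" "a2 < c" "A1 \<ge> 0" "A2 \<ge> 0" "\<epsilon> > 0"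
  shows "\<exists>x1. \<forall>x\<ge>x1. A1 * x powr a1 + A2 * x powr a2 \<le> \<epsilon> * x powr c"
proof -
  have t1: "((\<lambda>x. A1 * x powr (a1 - c)) \<longlongrightarrow> 0) at_top"
    using assms by (auto intro!: tendsto_mult_right_zero tendsto_neg_powr filterlim_ident)
  have t2: "((\<lambda>x. A2 * x powr (a2 - c)) \<longlongrightarrow> 0) at_top"
    using assms by (auto intro!: tendsto_mult_right_zero tendsto_neg_powr filterlim_ident)
  have e: "eventually (\<lambda>x. A1 * x powr (a1 - c) < \<epsilon>/2 \<and> A2 * x powr (a2 - c) < \<epsilon>/2 \<and> x > 0) at_top"
    using assms(5)
    by (intro eventually_conj order_tendstoD(2)[OF t1] order_tendstoD(2)[OF t2] eventually_gt_at_top) auto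
  then obtain x1 where x1: "\<And>x. x \<ge> x1 \<Longrightarrow> A1 * x powr (a1 - c) < \<epsilon>/2 \<and> A2 * x powr (a2 - c) < \<epsilon>/2 \<and> x > 0"
    by (auto simp: eventually_at_top_linorder)
  show ?thesis
  proof (intro exI allI impI)
    fix x assume "x \<ge> x1"
    note h = x1[OF this]
    have xc: "x powr c > 0" using h by simp
    have "A1 * x powr a1 = (A1 * x powr (a1 - c)) * x powr c" using h by (simp add: powr_add[symmetric])
    also have "\<dots> \<le> \<epsilon>/2 * x powr c" using h xc by (intro mult_right_mono) auto
    finally have 1: "A1 * x powr a1 \<le> \<epsilon>/2 * x powr c" .
    have "A2 * x powr a2 = (A2 * x powr (a2 - c)) * x powr c" using h by (simp add: powr_add[symmetric])
    also have "\<dots> \<le> \<epsilon>/2 * x powr c" using h xc by (intro mult_right_mono) auto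
    finally have 2: "A2 * x powr a2 \<le> \<epsilon>/2 * x powr c" .
    show "A1 * x powr a1 + A2 * x powr a2 \<le> \<epsilon> * x powr c" using 1 2 by simp
  qed
qed
theorem lemma3p7:
  fixes \<Sigma> :: "(real \<times> 'a) set" and S :: "'a set"
    and P :: "real \<times> 'a \<Rightarrow> (real \<times> 'a) pmf"
    and p Cp r :: real and b :: "'a \<Rightarrow> real"
  assumes lf: "locally_finite_state_space \<Sigma> S"
    and S_ne: "S \<noteq> {}"
    and closed: "\<And>s. s \<in> \<Sigma> \<Longrightarrow> set_pmf (P s) \<subseteq> \<Sigma>"
    and p: "p > 2"
    and moment: "\<And>x i. (x, i) \<in> \<Sigma> \<Longrightarrow>
        (\<integral>\<^sup>+ s. ennreal (\<bar>fst s - x\<bar> powr p) \<partial>measure_pmf (P (x, i))) \<le> ennreal Cp"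
    and r: "2 - p < r" "r \<le> p"
  shows "\<exists>\<zeta>. 0 < \<zeta> \<and> \<zeta> < 1 \<and>
    (\<forall>\<epsilon>>0. \<exists>x1. \<forall>x i. (x, i) \<in> \<Sigma> \<and> x \<ge> x1 \<longrightarrow>
       (\<integral>\<^sup>+ s. ennreal (\<bar>f_r r S b (fst s) (snd s) - f_r r S b x i\<bar>
              * indicator {s. \<bar>fst s - x\<bar> > x powr \<zeta>} s) \<partial>measure_pmf (P (x, i)))
         \<le> ennreal (\<epsilon> * x powr (r - 2)))"
proof -
  have finS: "finite S" and Ssub: "\<Sigma> \<subseteq> {0..} \<times> S"
    using lf unfolding locally_finite_state_space_def by auto
  define q where "q = max r 0"
  define M where "M = x0_thr r S b"
  define K where "K = 1 + \<bar>r\<bar> * Max ((\<lambda>i. \<bar>b i\<bar>) ` S) / 2"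
  define Cp' where "Cp' = max Cp 0"
  have M1: "M \<ge> 1" unfolding M_def by (rule x0_ge1[OF finS S_ne])
  have K0: "K \<ge> 0"
  proof -
    obtain j where "j \<in> S" using S_ne by auto
    hence "0 \<le> Max ((\<lambda>i. \<bar>b i\<bar>) ` S)" using finS S_ne
      by (meson Max_ge_iff abs_ge_zero finite_imageI image_eqI image_is_empty)
    thus ?thesis unfolding K_def by simp
  qed
  have fb: "\<And>y j. j \<in> S \<Longrightarrow> \<bar>f_r r S b y j\<bar> \<le> K * (max y M) powr q"
    unfolding K_def M_def q_def by (rule fbound[OF finS])
  have q0: "0 \<le> q" and qp: "q \<le> p" using r p by (auto simp: q_def)
  have p0: "p > 0" using p by simp
  define z1 where "z1 = (q + 2 - r) / p"
  define z2 where "z2 = (2 - r) / (p - q)"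
  define \<zeta> where "\<zeta> = (max z1 z2 + 1) / 2"
  have "q + 2 - r < p" using p r by (auto simp: q_def max_def)
  hence z1_1: "z1 < 1" using p0 by (simp add: z1_def divide_less_eq)
  have z1_0: "z1 > 0" using p0 q0 unfolding z1_def q_def by (auto intro!: divide_pos_pos)
  have z2_1: "z2 < 1"
  proof (cases "q = p")
    case True thus ?thesis by (simp add: z2_def)
  next
    case False
    hence "p - q > 0" using qp by simp
    moreover have "2 - r < p - q" using p r by (auto simp: q_def max_def)
    ultimately show ?thesis by (simp add: z2_def divide_less_eq)
  qed
  have zgt1: "\<zeta> > z1" and zgt2: "\<zeta> > z2" and zl1: "\<zeta> < 1"
    using z1_1 z2_1 by (auto simp: \<zeta>_def)
  have z0: "\<zeta> > 0" using zgt1 z1_0 by simp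
  have e1: "q - \<zeta> * p < r - 2"
  proof -
    have "z1 * p < \<zeta> * p" using zgt1 p0 by simp
    thus ?thesis using p0 by (simp add: z1_def)
  qed
  have e2: "\<zeta> * (q - p) < r - 2"
  proof (cases "q = p")
    case True thus ?thesis using p r by (simp add: q_def max_def split: if_splits)
  next
    case False
    hence pq: "p - q > 0" using qp by simp
    have "z2 * (p - q) < \<zeta> * (p - q)" using zgt2 pq by simp
    hence "2 - r < \<zeta> * (p - q)" using pq by (simp add: z2_def)
    thus ?thesis by (simp add: algebra_simps)
  qed
  show ?thesis
  proof (rule exI[of _ \<zeta>], intro conjI allI impI)
    show "0 < \<zeta>" "\<zeta> < 1" by (fact z0, fact zl1)
    fix \<epsilon> :: real assume eps: "\<epsilon> > 0"
    have Cp'0: "Cp' \<ge> 0" by (simp add: Cp'_def)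
    obtain x1 where x1: "\<And>x. x \<ge> x1 \<Longrightarrow>
        (K * (2 powr q + 1) * Cp') * x powr (q - \<zeta> * p) + (K * 2 powr q * Cp') * x powr (\<zeta> * (q - p))
          \<le> \<epsilon> * x powr (r - 2)"
      using eventual[OF e1 e2 _ _ eps, of "K * (2 powr q + 1) * Cp'" "K * 2 powr q * Cp'"] K0 Cp'0
      by auto
    show "\<exists>x1. \<forall>x i. (x, i) \<in> \<Sigma> \<and> x \<ge> x1 \<longrightarrow>
       (\<integral>\<^sup>+ s. ennreal (\<bar>f_r r S b (fst s) (snd s) - f_r r S b x i\<bar>
              * indicator {s. \<bar>fst s - x\<bar> > x powr \<zeta>} s) \<partial>measure_pmf (P (x, i)))
         \<le> ennreal (\<epsilon> * x powr (r - 2))"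
    proof (rule exI[of _ "max x1 M"], intro allI impI)
      fix x i assume xi: "(x, i) \<in> \<Sigma> \<and> max x1 M \<le> x"
      hence xS: "(x, i) \<in> \<Sigma>" and xx1: "x \<ge> x1" and xM: "x \<ge> M" by auto
      have iS: "i \<in> S" using xS Ssub by auto
      define c where "c = K * (2 powr q + 1) * x powr (q - \<zeta> * p) + K * 2 powr q * x powr (\<zeta> * (q - p))"
      have c0: "c \<ge> 0" using K0 by (simp add: c_def)
      have pt: "ennreal (\<bar>f_r r S b (fst s) (snd s) - f_r r S b x i\<bar>
              * indicator {s. \<bar>fst s - x\<bar> > x powr \<zeta>} s) \<le> ennreal (c * \<bar>fst s - x\<bar> powr p)"
        if s: "s \<in> set_pmf (P (x, i))" for s
      proof (cases "\<bar>fst s - x\<bar> > x powr \<zeta>")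
        case True
        have sS: "snd s \<in> S" using s closed[OF xS] Ssub by auto
        have "\<bar>f_r r S b (fst s) (snd s) - f_r r S b x i\<bar> \<le> c * \<bar>fst s - x\<bar> powr p"
          unfolding c_def
          by (rule pointwise[OF xM M1 refl True q0 qp K0 fb[OF sS] fb[OF iS]])
        thus ?thesis using True by (intro ennreal_leI) simp
      next
        case False
        thus ?thesis by simp
      qed
      have "(\<integral>\<^sup>+ s. ennreal (\<bar>f_r r S b (fst s) (snd s) - f_r r S b x i\<bar>
              * indicator {s. \<bar>fst s - x\<bar> > x powr \<zeta>} s) \<partial>measure_pmf (P (x, i)))
          \<le> (\<integral>\<^sup>+ s. ennreal (c * \<bar>fst s - x\<bar> powr p) \<partial>measure_pmf (P (x, i)))"
        using pt by (intro nn_integral_mono_AE) (simp add: AE_measure_pmf_iff)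
      also have "\<dots> = ennreal c * (\<integral>\<^sup>+ s. ennreal (\<bar>fst s - x\<bar> powr p) \<partial>measure_pmf (P (x, i)))"
        using c0 by (simp add: ennreal_mult nn_integral_cmult)
      also have "\<dots> \<le> ennreal c * ennreal Cp"
        by (intro mult_left_mono moment[OF xS]) simp
      also have "ennreal Cp = ennreal Cp'"
        by (cases "Cp \<ge> 0") (auto simp: Cp'_def ennreal_neg)
      also have "ennreal c * ennreal Cp' = ennreal (c * Cp')"
        using c0 Cp'0 by (simp add: ennreal_mult)
      also have "\<dots> \<le> ennreal (\<epsilon> * x powr (r - 2))"
      proof (intro ennreal_leI)
        show "c * Cp' \<le> \<epsilon> * x powr (r - 2)"
          using x1[OF xx1] by (simp add: c_def algebra_simps)
      qed
      finally show "(\<integral>\<^sup>+ s. ennreal (\<bar>f_r r S b (fst s) (snd s) - f_r r S b x i\<bar>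
              * indicator {s. \<bar>fst s - x\<bar> > x powr \<zeta>} s) \<partial>measure_pmf (P (x, i)))
          \<le> ennreal (\<epsilon> * x powr (r - 2))" .
    qed
  qed
qed

end
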